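(* Let $e\in E_A$. Suppose the monitor state of lifeline $A$ is coherent before evaluating formulas at $e$. Then, for every $\psi\in\mathsf{sub}(\Phi)$, \[ \mathsf{Eval}_A(\psi,e,\mathsf{old}_A)=1 \quad\text{iff}\quad M,e\models\psi . \]
   Context: Setting. $\mathscr L$ is a finite set of lifelines. A message sequence chart (MSC) is $M=(E,\to,\lhd,\mathsf{kind},\mathsf{pid},\mathsf{val})$ with $E$ a finite set of events, $\mathsf{pid}:E\to\mathscr L$, $E_A=\{e\in E\mid \mathsf{pid}(e)=A\}$. The relation $\to$ relates only events on the same lifeline, and for each $A$ its restriction to $E_A$ is the immediate-successor relation of a finite linear order $\leq_A$ (strict version $<_A$). $\mathsf{kind}(e)\in\{\mathsf{act},\mathsf{recv},\mathsf{choice}\}\cup(\{\mathsf{send}\}\times\mathscr L)$. The message relation $\lhd$ is a partial matching: if $s\lhd r$ then $\mathsf{kind}(s)=(\mathsf{send},\mathsf{pid}(r))$, $\mathsf{kind}(r)=\mathsf{recv}$, $\mathsf{pid}(s)\neq\mathsf{pid}(r)$; every receive has exactly one matching send, every send at most one matching receive (not necessarily FIFO). The graph of $\to$ and $\lhd$ edges is acyclic; the causal order $\leq_M$ is its reflexive transitive closure. $\nu_e=\mathsf{val}(e)$ is the valuation (local store of $\mathsf{pid}(e)$ after $e$). $e^B_k$ is the $k$-th event of lifeline $B$ (indexing from 1). Causal Past Logic (CPL): terms $t::=x\mid A.x$ (the value of $x$ at the latest causally visible $A$-event); atoms $\alpha::=p(t_1,\dots,t_n)$; formulas $\varphi::=\alpha\mid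 @_A\varphi\mid \mathsf{Y}\varphi\mid\varphi_1\mathbin{\mathsf{S}}\varphi_2\mid\varphi_1\wedge\varphi_2\mid\varphi_1\vee\varphi_2\mid\neg\varphi$. For $e$ with $\mathsf{pid}(e)=A$: $\mathsf{last}_{\mathsf{loc}}(e)=\max\{f\in E_A\mid f<_A e\}$ and, for any $B$, $\mathsf{last}_B(e)=\max\{f\in E_B\mid f\leq_M e\}$ (when these exist). Term values: $x$ evaluates to $\nu_e(x)$; $A.x$ evaluates to $\nu_{\mathsf{last}_A(e)}(x)$ when defined. An atom is false if any of its terms is undefined; otherwise its truth ($\nu_e\models_M\alpha$) is fixed by the application. $M,e\models\mathsf{Y}\varphi$ iff $\mathsf{last}_{\mathsf{loc}}(e)$ exists and satisfies $\varphi$; $M,e\models @_A\varphi$ iff $\mathsf{last}_A(e)$ exists and satisfies $\varphi$ (non-strict: equals $e$ if $e\in E_A$); for $e\in E_A$, $M,e\models\varphi_1\mathbin{\mathsf{S}}\varphi_2$ iff some $f\in E_A$ with $f\leq_A e$ satisfies $\varphi_2$ and every $g\in E_A$ with $f<_A g\leq_A e$ satisfies $\varphi_1$; Boolean connectives as usual. Monitor. $\Phi$ is a finite set of CPL formulas, $\mathsf{sub}(\Phi)$ its subformulas, $\mathsf{Vars}(\Phi)$ the variable names occurring in terms $B.x$. Each lifeline $A$ keeps: a vector clock $\mathsf{vc}_A:\mathscr L\to\mathbb N$; a partial Boolean view $\mathsf{view}_A:\mathscr L\times\mathsf{sub}(\Phi)\rightharpoonup\{0,1\}$; a partial variable view $\mathsf{var}_A:\mathscr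 L\times\mathsf{Vars}(\Phi)\rightharpoonup\mathsf{Val}$; a local store $\sigma_A$; a total map $\mathsf{old}_A:\mathsf{sub}(\Phi)\to\{0,1\}$. The procedure $\mathsf{Eval}_A(\psi,e,\mathsf{old}_A)$ computes: for an atom $\alpha$, its truth with unqualified variables read from $\sigma_A$ and terms $B.x$ read from $\mathsf{var}_A(B,x)$ (a missing entry makes the atom false); $\mathsf{Y}\theta\mapsto(\mathsf{vc}_A(A)>1)\wedge\mathsf{old}_A(\theta)$; $@_B\theta\mapsto$ $\mathsf{Eval}_A(\theta,e,\mathsf{old}_A)$ if $B=A$, else $0$ if $\mathsf{vc}_A(B)=0$, else $\mathsf{view}_A(B,\theta)$; $\theta_1\mathbin{\mathsf{S}}\theta_2\mapsto \mathsf{Eval}_A(\theta_2,\cdot)\vee(\mathsf{Eval}_A(\theta_1,\cdot)\wedge(\mathsf{vc}_A(A)>1)\wedge\mathsf{old}_A(\theta_1\mathbin{\mathsf{S}}\theta_2))$; $\neg,\wedge,\vee$ computed recursively. Coherence. For $e\in E_A$, the state of $A$ is coherent before evaluating formulas at $e$ if: (i) for every lifeline $B$, $\mathsf{vc}_A(B)=|\{f\in E_B\mid f\leq_M e\}|$; (ii) for every $B\neq A$ with $k=\mathsf{vc}_A(B)>0$, $\mathsf{view}_A(B,\psi)$ is defined and equals $1$ iff $M,e^B_k\models\psi$ for all $\psi\in\mathsf{sub}(\Phi)$, and $\mathsf{var}_A(B,x)=\mathsf{val}(e^B_k)(x)$ for all $x\in\mathsf{Vars}(\Phi)$; if $\mathsf{vc}_A(B)=0$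 all entries for $B$ are absent; (iii) $\sigma_A(x)=\mathsf{val}(e)(x)$ for every monitored unqualified variable $x$, and $\mathsf{var}_A(A,x)$ is defined and equal to $\mathsf{val}(e)(x)$ for every $x\in\mathsf{Vars}(\Phi)$ (no condition on $\mathsf{view}_A(A,\cdot)$); (iv) for every $\psi\in\mathsf{sub}(\Phi)$, $\mathsf{old}_A(\psi)$ is the truth value of $\psi$ at the previous local event of $A$ if it exists, and false otherwise. *)

theory Defs
  imports Main
begin

datatype 'l ekind = Act | Recv | Choice | Send 'l

record ('e, 'l, 'x, 'v) msc =
  events :: "'e set"
  succ   :: "'e \<Rightarrow> 'e \<Rightarrow> bool"
  msg    :: "'e \<Rightarrow> 'e \<Rightarrow> bool"
  kind   :: "'e \<Rightarrow> 'l ekind"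
  pid    :: "'e \<Rightarrow> 'l"
  val    :: "'e \<Rightarrow> 'x \<Rightarrow> 'v"

definition E_of :: "('e, 'l, 'x, 'v) msc \<Rightarrow> 'l \<Rightarrow> 'e set" where
  "E_of M A = {e \<in> events M. pid M e = A}"

definition wf_msc :: "('e, 'l, 'x, 'v) msc \<Rightarrow> bool" where
  "wf_msc M \<longleftrightarrow>
     finite (events M) \<and>
     (\<forall>e f. succ M e f \<longrightarrow> e \<in> events M \<and> f \<in> events M \<and> pid M e = pid M f) \<and>
     (\<forall>A. \<exists>le. (\<forall>e\<in>E_of M A. le e e) \<and>
               (\<forall>e\<in>E_of M A. \<forall>f\<in>E_of M A. le e f \<and> le f e \<longrightarrow> e = f) \<and>
               (\<forall>e\<in>E_of M A. \<forall>f\<in>E_of M A. \<forall>g\<in>E_of M A. le e f \<and> le f g \<longrightarrow> le e g) \<and>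
               (\<forall>e\<in>E_of M A. \<forall>f\<in>E_of M A. le e f \<or> le f e) \<and>
               (\<forall>e\<in>E_of M A. \<forall>f\<in>E_of M A. succ M e f \<longleftrightarrow>
                  (le e f \<and> e \<noteq> f \<and> \<not> (\<exists>g\<in>E_of M A. le e g \<and> le g f \<and> g \<noteq> e \<and> g \<noteq> f)))) \<and>
     (\<forall>s r. msg M s r \<longrightarrow> s \<in> events M \<and> r \<in> events M \<and>
              kind M s = Send (pid M r) \<and> kind M r = Recv \<and> pid M s \<noteq> pid M r) \<and>
     (\<forall>r\<in>events M. kind M r = Recv \<longrightarrow> (\<exists>!s. msg M s r)) \<and>
     (\<forall>s r r'. msg M s r \<and> msg M s r' \<longrightarrow> r = r') \<and>
     (\<forall>e. \<not> (\<lambda>a b. succ M a b \<or> msg M a b)\<^sup>+\<^sup>+ e e)"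

definition loc_le :: "('e, 'l, 'x, 'v) msc \<Rightarrow> 'e \<Rightarrow> 'e \<Rightarrow> bool" where
  "loc_le M e f \<longleftrightarrow> e \<in> events M \<and> f \<in> events M \<and> pid M e = pid M f \<and> (succ M)\<^sup>*\<^sup>* e f"

definition loc_lt :: "('e, 'l, 'x, 'v) msc \<Rightarrow> 'e \<Rightarrow> 'e \<Rightarrow> bool" where
  "loc_lt M e f \<longleftrightarrow> loc_le M e f \<and> e \<noteq> f"

definition causal_le :: "('e, 'l, 'x, 'v) msc \<Rightarrow> 'e \<Rightarrow> 'e \<Rightarrow> bool" where
  "causal_le M e f \<longleftrightarrow> e \<in> events M \<and> f \<in> events M \<and> (\<lambda>a b. succ M a b \<or> msg M a b)\<^sup>*\<^sup>* e f"

definition last_loc :: "('e, 'l, 'x, 'v) msc \<Rightarrow> 'e \<Rightarrow> 'e option" where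
  "last_loc M e = (if \<exists>f. loc_lt M f e
      then Some (THE f. loc_lt M f e \<and> (\<forall>g. loc_lt M g e \<longrightarrow> loc_le M g f))
      else None)"

definition last_on :: "('e, 'l, 'x, 'v) msc \<Rightarrow> 'l \<Rightarrow> 'e \<Rightarrow> 'e option" where
  "last_on M B e = (if \<exists>f\<in>E_of M B. causal_le M f e
      then Some (THE f. f \<in> E_of M B \<and> causal_le M f e \<and>
                   (\<forall>g\<in>E_of M B. causal_le M g e \<longrightarrow> loc_le M g f))
      else None)"

text \<open>\<open>e^B_k\<close>: the \<open>k\<close>-th event of lifeline \<open>B\<close> (indexing from 1).\<close>
definition nth_event :: "('e, 'l, 'x, 'v) msc \<Rightarrow> 'l \<Rightarrow> nat \<Rightarrow> 'e" where
  "nth_event M B k = (THE f. f \<in> E_of M B \<and> card {g \<in> E_of M B. loc_le M g f} = k)"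

datatype ('l, 'x) cpl_term = Loc 'x | Qual 'l 'x

datatype ('l, 'x, 'p) cpl =
    Atom 'p "('l, 'x) cpl_term list"
  | At 'l "('l, 'x, 'p) cpl"
  | Yest "('l, 'x, 'p) cpl"
  | Since "('l, 'x, 'p) cpl" "('l, 'x, 'p) cpl"
  | Conj "('l, 'x, 'p) cpl" "('l, 'x, 'p) cpl"
  | Disj "('l, 'x, 'p) cpl" "('l, 'x, 'p) cpl"
  | Neg "('l, 'x, 'p) cpl"

fun term_val :: "('e, 'l, 'x, 'v) msc \<Rightarrow> 'e \<Rightarrow> ('l, 'x) cpl_term \<Rightarrow> 'v option" where
  "term_val M e (Loc x) = Some (val M e x)"
| "term_val M e (Qual A x) = map_option (\<lambda>f. val M f x) (last_on M A e)"

primrec sat :: "('e, 'l, 'x, 'v) msc \<Rightarrow> ('p \<Rightarrow> 'v list \<Rightarrow> bool) \<Rightarrow> ('l, 'x, 'p) cpl \<Rightarrow> 'e \<Rightarrow> bool" where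
  "sat M I (Atom p ts) e \<longleftrightarrow>
     (\<forall>t\<in>set ts. term_val M e t \<noteq> None) \<and> I p (map (\<lambda>t. the (term_val M e t)) ts)"
| "sat M I (At A \<phi>) e \<longleftrightarrow> (case last_on M A e of Some f \<Rightarrow> sat M I \<phi> f | None \<Rightarrow> False)"
| "sat M I (Yest \<phi>) e \<longleftrightarrow> (case last_loc M e of Some f \<Rightarrow> sat M I \<phi> f | None \<Rightarrow> False)"
| "sat M I (Since \<phi>1 \<phi>2) e \<longleftrightarrow>
     (\<exists>f. loc_le M f e \<and> sat M I \<phi>2 f \<and> (\<forall>g. loc_lt M f g \<and> loc_le M g e \<longrightarrow> sat M I \<phi>1 g))"
| "sat M I (Conj \<phi>1 \<phi>2) e \<longleftrightarrow> sat M I \<phi>1 e \<and> sat M I \<phi>2 e"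
| "sat M I (Disj \<phi>1 \<phi>2) e \<longleftrightarrow> sat M I \<phi>1 e \<or> sat M I \<phi>2 e"
| "sat M I (Neg \<phi>) e \<longleftrightarrow> \<not> sat M I \<phi> e"

primrec sub :: "('l, 'x, 'p) cpl \<Rightarrow> ('l, 'x, 'p) cpl set" where
  "sub (Atom p ts) = {Atom p ts}"
| "sub (At A \<phi>) = insert (At A \<phi>) (sub \<phi>)"
| "sub (Yest \<phi>) = insert (Yest \<phi>) (sub \<phi>)"
| "sub (Since \<phi>1 \<phi>2) = insert (Since \<phi>1 \<phi>2) (sub \<phi>1 \<union> sub \<phi>2)"
| "sub (Conj \<phi>1 \<phi>2) = insert (Conj \<phi>1 \<phi>2) (sub \<phi>1 \<union> sub \<phi>2)"
| "sub (Disj \<phi>1 \<phi>2) = insert (Disj \<phi>1 \<phi>2) (sub \<phi>1 \<union> sub \<phi>2)"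
| "sub (Neg \<phi>) = insert (Neg \<phi>) (sub \<phi>)"

definition subs :: "('l, 'x, 'p) cpl set \<Rightarrow> ('l, 'x, 'p) cpl set" where
  "subs \<Phi> = (\<Union>\<phi>\<in>\<Phi>. sub \<phi>)"

text \<open>\<open>Vars(\<Phi>)\<close>: variable names occurring in qualified terms \<open>B.x\<close>.\<close>
definition QVars :: "('l, 'x, 'p) cpl set \<Rightarrow> 'x set" where
  "QVars \<Phi> = {x. \<exists>p ts B. Atom p ts \<in> subs \<Phi> \<and> Qual B x \<in> set ts}"

definition LVars :: "('l, 'x, 'p) cpl set \<Rightarrow> 'x set" where
  "LVars \<Phi> = {x. \<exists>p ts. Atom p ts \<in> subs \<Phi> \<and> Loc x \<in> set ts}"

record ('l, 'x, 'v, 'p) mstate =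
  vc    :: "'l \<Rightarrow> nat"
  view  :: "'l \<Rightarrow> ('l, 'x, 'p) cpl \<Rightarrow> bool option"
  vars  :: "'l \<Rightarrow> 'x \<Rightarrow> 'v option"
  store :: "'x \<Rightarrow> 'v"
  old   :: "('l, 'x, 'p) cpl \<Rightarrow> bool"

fun mterm_val :: "('l, 'x, 'v, 'p) mstate \<Rightarrow> ('l, 'x) cpl_term \<Rightarrow> 'v option" where
  "mterm_val st (Loc x) = Some (store st x)"
| "mterm_val st (Qual B x) = vars st B x"

text \<open>\<open>Eval_A(\<psi>, e, old_A)\<close>; the event \<open>e\<close> is not consulted by the procedure, and
  \<open>old_A\<close> is passed explicitly.\<close>
primrec Eval :: "'l \<Rightarrow> ('p \<Rightarrow> 'v list \<Rightarrow> bool) \<Rightarrow> ('l, 'x, 'v, 'p) mstate \<Rightarrow>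
                 (('l, 'x, 'p) cpl \<Rightarrow> bool) \<Rightarrow> ('l, 'x, 'p) cpl \<Rightarrow> bool" where
  "Eval A I st oldf (Atom p ts) \<longleftrightarrow>
     (\<forall>t\<in>set ts. mterm_val st t \<noteq> None) \<and> I p (map (\<lambda>t. the (mterm_val st t)) ts)"
| "Eval A I st oldf (Yest \<theta>) \<longleftrightarrow> vc st A > 1 \<and> oldf \<theta>"
| "Eval A I st oldf (At B \<theta>) \<longleftrightarrow>
     (if B = A then Eval A I st oldf \<theta>
      else if vc st B = 0 then False else view st B \<theta> = Some True)"
| "Eval A I st oldf (Since \<theta>1 \<theta>2) \<longleftrightarrow>
     Eval A I st oldf \<theta>2 \<or> (Eval A I st oldf \<theta>1 \<and> vc st A > 1 \<and> oldf (Since \<theta>1 \<theta>2))"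
| "Eval A I st oldf (Conj \<theta>1 \<theta>2) \<longleftrightarrow> Eval A I st oldf \<theta>1 \<and> Eval A I st oldf \<theta>2"
| "Eval A I st oldf (Disj \<theta>1 \<theta>2) \<longleftrightarrow> Eval A I st oldf \<theta>1 \<or> Eval A I st oldf \<theta>2"
| "Eval A I st oldf (Neg \<theta>) \<longleftrightarrow> \<not> Eval A I st oldf \<theta>"

definition coherent ::
  "('e, 'l, 'x, 'v) msc \<Rightarrow> ('p \<Rightarrow> 'v list \<Rightarrow> bool) \<Rightarrow> ('l, 'x, 'p) cpl set \<Rightarrow>
   'l \<Rightarrow> ('l, 'x, 'v, 'p) mstate \<Rightarrow> 'e \<Rightarrow> bool" where
  "coherent M I \<Phi> A st e \<longleftrightarrow>
     (\<forall>B. vc st B = card {f \<in> E_of M B. causal_le M f e}) \<and>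
     (\<forall>B. B \<noteq> A \<longrightarrow>
        (vc st B > 0 \<longrightarrow>
           (\<forall>\<psi>\<in>subs \<Phi>. view st B \<psi> = Some (sat M I \<psi> (nth_event M B (vc st B)))) \<and>
           (\<forall>x\<in>QVars \<Phi>. vars st B x = Some (val M (nth_event M B (vc st B)) x))) \<and>
        (vc st B = 0 \<longrightarrow>
           (\<forall>\<psi>\<in>subs \<Phi>. view st B \<psi> = None) \<and> (\<forall>x\<in>QVars \<Phi>. vars st B x = None))) \<and>
     (\<forall>x\<in>LVars \<Phi>. store st x = val M e x) \<and>
     (\<forall>x\<in>QVars \<Phi>. vars st A x = Some (val M e x)) \<and>
     (\<forall>\<psi>\<in>subs \<Phi>. old st \<psi> = (case last_loc M e of Some f \<Rightarrow> sat M I \<psi> f | None \<Rightarrow> False))"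

end

theory Submission
  imports Defs
begin

lemma wf_fin: "wf_msc M \<Longrightarrow> finite (events M)"
  unfolding wf_msc_def by (erule conjunct1)

lemma wf_succ: "wf_msc M \<Longrightarrow> succ M e f \<Longrightarrow> e \<in> events M \<and> f \<in> events M \<and> pid M e = pid M f"
  unfolding wf_msc_def by (drule conjunct2, drule conjunct1) blast

lemma wf_le: "wf_msc M \<Longrightarrow> \<exists>le. (\<forall>e\<in>E_of M A. le e e) \<and>
               (\<forall>e\<in>E_of M A. \<forall>f\<in>E_of M A. le e f \<and> le f e \<longrightarrow> e = f) \<and>
               (\<forall>e\<in>E_of M A. \<forall>f\<in>E_of M A. \<forall>g\<in>E_of M A. le e f \<and> le f g \<longrightarrow> le e g) \<and>
               (\<forall>e\<in>E_of M A. \<forall>f\<in>E_of M A. le e f \<or> le f e) \<and>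
               (\<forall>e\<in>E_of M A. \<forall>f\<in>E_of M A. succ M e f \<longleftrightarrow>
                  (le e f \<and> e \<noteq> f \<and> \<not> (\<exists>g\<in>E_of M A. le e g \<and> le g f \<and> g \<noteq> e \<and> g \<noteq> f)))"
  unfolding wf_msc_def by (drule conjunct2, drule conjunct2, drule conjunct1) (erule spec)

lemma wf_acyc: "wf_msc M \<Longrightarrow> \<not> (\<lambda>a b. succ M a b \<or> msg M a b)\<^sup>+\<^sup>+ e e"
  unfolding wf_msc_def
  by (drule conjunct2, drule conjunct2, drule conjunct2, drule conjunct2, drule conjunct2, drule conjunct2)
     (erule spec)

lemma succ_rtc_causal: "(succ M)\<^sup>*\<^sup>* a b \<Longrightarrow> (\<lambda>a b. succ M a b \<or> msg M a b)\<^sup>*\<^sup>* a b"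
  by (induction rule: rtranclp_induct) (auto intro: rtranclp.rtrancl_into_rtrancl)

lemma loc_causal: "loc_le M a b \<Longrightarrow> causal_le M a b"
  unfolding loc_le_def causal_le_def using succ_rtc_causal[of M a b] by auto

lemma causal_trans: "causal_le M a b \<Longrightarrow> causal_le M b c \<Longrightarrow> causal_le M a c"
  unfolding causal_le_def by (meson rtranclp_trans)

lemma causal_antisym:
  assumes "wf_msc M" "causal_le M a b" "causal_le M b a" shows "a = b"
proof (rule ccontr)
  assume "a \<noteq> b"
  let ?R = "\<lambda>a b. succ M a b \<or> msg M a b"
  have "?R\<^sup>*\<^sup>* a b" "?R\<^sup>*\<^sup>* b a" using assms unfolding causal_le_def by auto
  then have "?R\<^sup>+\<^sup>+ a b" using \<open>a \<noteq> b\<close> by (meson rtranclpD)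
  then have "?R\<^sup>+\<^sup>+ a a" using \<open>?R\<^sup>*\<^sup>* b a\<close> by (meson tranclp_rtranclp_tranclp)
  then show False using wf_acyc[OF assms(1)] by blast
qed

lemma loc_trans: "loc_le M a b \<Longrightarrow> loc_le M b c \<Longrightarrow> loc_le M a c"
  unfolding loc_le_def by (metis rtranclp_trans)

lemma loc_antisym: "wf_msc M \<Longrightarrow> loc_le M a b \<Longrightarrow> loc_le M b a \<Longrightarrow> a = b"
  by (rule causal_antisym[OF _ loc_causal loc_causal])

lemma loc_refl: "e \<in> events M \<Longrightarrow> loc_le M e e"
  unfolding loc_le_def by simp

lemma loc_E: "loc_le M a b \<Longrightarrow> a \<in> E_of M (pid M b) \<and> b \<in> E_of M (pid M b)"
  unfolding loc_le_def E_of_def by auto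

lemma cover_rtc:
  assumes fin: "finite E"
    and refl: "\<forall>e\<in>E. le e e"
    and antisym: "\<forall>e\<in>E. \<forall>f\<in>E. le e f \<and> le f e \<longrightarrow> e = f"
    and trans: "\<forall>e\<in>E. \<forall>f\<in>E. \<forall>g\<in>E. le e f \<and> le f g \<longrightarrow> le e g"
    and sc: "\<forall>e\<in>E. \<forall>f\<in>E. S e f \<longleftrightarrow> (le e f \<and> e \<noteq> f \<and> \<not> (\<exists>g\<in>E. le e g \<and> le g f \<and> g \<noteq> e \<and> g \<noteq> f))"
  shows "e \<in> E \<Longrightarrow> f \<in> E \<Longrightarrow> le e f \<Longrightarrow> S\<^sup>*\<^sup>* e f"
proof (induction "card {g\<in>E. le e g \<and> le g f}" arbitrary: e f rule: less_induct)
  case less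
  show ?case
  proof cases
    assume "e = f" then show ?thesis by simp
  next
    assume ne: "e \<noteq> f"
    show ?thesis
    proof (cases "\<exists>g\<in>E. le e g \<and> le g f \<and> g \<noteq> e \<and> g \<noteq> f")
      case False
      then have "S e f" using sc ne less.prems by auto
      thus ?thesis by auto
    next
      case True
      then obtain g where g: "g \<in> E" "le e g" "le g f" "g \<noteq> e" "g \<noteq> f" by blast
      have c1: "card {x\<in>E. le e x \<and> le x g} < card {x\<in>E. le e x \<and> le x f}"
      proof (rule psubset_card_mono)
        show "finite {x\<in>E. le e x \<and> le x f}" using fin by simp
        have "{x\<in>E. le e x \<and> le x g} \<subseteq> {x\<in>E. le e x \<and> le x f}"
          using trans g less.prems by blast
        moreover have "f \<notin> {x\<in>E. le e x \<and> le x g}" using antisym g less.prems by blast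
        moreover have "f \<in> {x\<in>E. le e x \<and> le x f}" using less.prems refl by simp
        ultimately show "{x\<in>E. le e x \<and> le x g} \<subset> {x\<in>E. le e x \<and> le x f}" by blast
      qed
      have c2: "card {x\<in>E. le g x \<and> le x f} < card {x\<in>E. le e x \<and> le x f}"
      proof (rule psubset_card_mono)
        show "finite {x\<in>E. le e x \<and> le x f}" using fin by simp
        have "{x\<in>E. le g x \<and> le x f} \<subseteq> {x\<in>E. le e x \<and> le x f}"
          using trans g less.prems by blast
        moreover have "e \<notin> {x\<in>E. le g x \<and> le x f}" using antisym g less.prems by blast
        moreover have "e \<in> {x\<in>E. le e x \<and> le x f}" using less.prems refl by simp
        ultimately show "{x\<in>E. le g x \<and> le x f} \<subset> {x\<in>E. le e x \<and> le x f}" by blast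
      qed
      have "S\<^sup>*\<^sup>* e g" using less.hyps[OF c1] g less.prems by blast
      moreover have "S\<^sup>*\<^sup>* g f" using less.hyps[OF c2] g less.prems by blast
      ultimately show ?thesis by (rule rtranclp_trans)
    qed
  qed
qed

lemma loc_total:
  assumes wf: "wf_msc M" and a: "a \<in> E_of M A" and b: "b \<in> E_of M A"
  shows "loc_le M a b \<or> loc_le M b a"
proof -
  obtain le where
    r: "\<forall>e\<in>E_of M A. le e e" and
    an: "\<forall>e\<in>E_of M A. \<forall>f\<in>E_of M A. le e f \<and> le f e \<longrightarrow> e = f" and
    tr: "\<forall>e\<in>E_of M A. \<forall>f\<in>E_of M A. \<forall>g\<in>E_of M A. le e f \<and> le f g \<longrightarrow> le e g" and
    to: "\<forall>e\<in>E_of M A. \<forall>f\<in>E_of M A. le e f \<or> le f e" and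
    sc: "\<forall>e\<in>E_of M A. \<forall>f\<in>E_of M A. succ M e f \<longleftrightarrow>
                  (le e f \<and> e \<noteq> f \<and> \<not> (\<exists>g\<in>E_of M A. le e g \<and> le g f \<and> g \<noteq> e \<and> g \<noteq> f))"
    using wf_le[OF wf, of A] by (elim exE conjE)
  have fin: "finite (E_of M A)" using wf_fin[OF wf] unfolding E_of_def by simp
  have "(succ M)\<^sup>*\<^sup>* a b \<or> (succ M)\<^sup>*\<^sup>* b a"
    using cover_rtc[OF fin r an tr sc] to a b by blast
  then show ?thesis using a b unfolding loc_le_def E_of_def by auto
qed

lemma finite_max:
  assumes "finite S" "S \<noteq> {}" "S \<subseteq> T"
    and "\<forall>a\<in>T. \<forall>b\<in>T. R a b \<or> R b a"
    and "\<forall>a\<in>T. \<forall>b\<in>T. \<forall>c\<in>T. R a b \<longrightarrow> R b c \<longrightarrow> R a c"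
    and "\<forall>a\<in>T. R a a"
  shows "\<exists>m\<in>S. \<forall>g\<in>S. R g m"
  using assms
proof (induction S rule: finite_ne_induct)
  case (singleton x)
  have "x \<in> T" using singleton(1) by simp
  then have "R x x" using singleton(4) by blast
  then show ?case by simp
next
  case (insert x F)
  have xT: "x \<in> T" and FT: "F \<subseteq> T" using insert.prems(1) by auto
  obtain m where m: "m \<in> F" "\<forall>g\<in>F. R g m"
    using insert.IH[OF FT insert.prems(2) insert.prems(3) insert.prems(4)] by (elim bexE)
  have mT: "m \<in> T" using m(1) FT by blast
  show ?case
  proof (cases "R m x")
    case True
    have "\<forall>g\<in>insert x F. R g x"
    proof
      fix g assume g: "g \<in> insert x F"
      show "R g x"
      proof (cases "g = x")
        case True then show ?thesis using insert.prems(4) xT by simp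
      next
        case False
        then have gF: "g \<in> F" using g by simp
        then have gT: "g \<in> T" using FT by blast
        have "R g m" using m(2) gF by simp
        then show ?thesis using insert.prems(3) gT mT xT \<open>R m x\<close> by blast
      qed
    qed
    then show ?thesis by blast
  next
    case False
    then have "R x m" using insert.prems(2) xT mT by blast
    then have "\<forall>g\<in>insert x F. R g m" using m(2) by simp
    then show ?thesis using m(1) by blast
  qed
qed

lemma loc_props:
  assumes wf: "wf_msc M"
  shows "\<forall>a\<in>E_of M B. \<forall>b\<in>E_of M B. loc_le M a b \<or> loc_le M b a"
    and "\<forall>a\<in>E_of M B. \<forall>b\<in>E_of M B. \<forall>c\<in>E_of M B. loc_le M a b \<longrightarrow> loc_le M b c \<longrightarrow> loc_le M a c"
    and "\<forall>a\<in>E_of M B. loc_le M a a"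
proof -
  show "\<forall>a\<in>E_of M B. \<forall>b\<in>E_of M B. loc_le M a b \<or> loc_le M b a"
    using loc_total[OF wf] by (intro ballI) simp
  show "\<forall>a\<in>E_of M B. \<forall>b\<in>E_of M B. \<forall>c\<in>E_of M B. loc_le M a b \<longrightarrow> loc_le M b c \<longrightarrow> loc_le M a c"
    by (intro ballI impI) (erule (1) loc_trans)
  show "\<forall>a\<in>E_of M B. loc_le M a a"
    by (auto simp: E_of_def intro: loc_refl)
qed

lemma last_loc_char:
  assumes wf: "wf_msc M" and ex: "\<exists>f. loc_lt M f e"
  shows "\<exists>p. last_loc M e = Some p \<and> loc_lt M p e \<and> (\<forall>g. loc_lt M g e \<longrightarrow> loc_le M g p)"
proof -
  let ?S = "{f. loc_lt M f e}"
  let ?T = "E_of M (pid M e)"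
  have ST: "?S \<subseteq> ?T"
  proof
    fix f assume "f \<in> ?S"
    then have "loc_le M f e" unfolding loc_lt_def by simp
    then show "f \<in> ?T" using loc_E[of M f e] by simp
  qed
  have finT: "finite ?T" using wf_fin[OF wf] unfolding E_of_def by simp
  have fin: "finite ?S" using finite_subset[OF ST finT] .
  have ne: "?S \<noteq> {}" using ex by blast
  obtain m where m: "m \<in> ?S" "\<forall>g\<in>?S. loc_le M g m"
    using finite_max[OF fin ne ST loc_props[OF wf]] by blast
  have the_eq: "(THE f. loc_lt M f e \<and> (\<forall>g. loc_lt M g e \<longrightarrow> loc_le M g f)) = m"
  proof (rule the_equality)
    show "loc_lt M m e \<and> (\<forall>g. loc_lt M g e \<longrightarrow> loc_le M g m)" using m by simp
  next
    fix f assume f: "loc_lt M f e \<and> (\<forall>g. loc_lt M g e \<longrightarrow> loc_le M g f)"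
    have "loc_le M m f" using f m(1) by simp
    moreover have "loc_le M f m" using m(2) f by simp
    ultimately show "f = m" using loc_antisym[OF wf] by blast
  qed
  have "last_loc M e = Some m" unfolding last_loc_def if_P[OF ex] the_eq by (rule refl)
  moreover have "loc_lt M m e" using m(1) by simp
  moreover have "\<forall>g. loc_lt M g e \<longrightarrow> loc_le M g m" using m(2) by simp
  ultimately show ?thesis by (intro exI[where x=m] conjI) assumption+
qed

lemma last_on_char:
  assumes wf: "wf_msc M" and ne: "{f\<in>E_of M B. causal_le M f e} \<noteq> {}"
  shows "\<exists>m. last_on M B e = Some m \<and> m \<in> E_of M B \<and> causal_le M m e \<and>
             {f\<in>E_of M B. causal_le M f e} = {g\<in>E_of M B. loc_le M g m}"
proof -
  let ?S = "{f\<in>E_of M B. causal_le M f e}"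
  have fin: "finite ?S" using wf_fin[OF wf] unfolding E_of_def by simp
  have ST: "?S \<subseteq> E_of M B" by blast
  obtain m where m: "m \<in> ?S" "\<forall>g\<in>?S. loc_le M g m"
    using finite_max[OF fin ne ST loc_props[OF wf]] by blast
  have the_eq: "(THE f. f \<in> E_of M B \<and> causal_le M f e \<and>
                   (\<forall>g\<in>E_of M B. causal_le M g e \<longrightarrow> loc_le M g f)) = m"
  proof (rule the_equality)
    show "m \<in> E_of M B \<and> causal_le M m e \<and> (\<forall>g\<in>E_of M B. causal_le M g e \<longrightarrow> loc_le M g m)"
      using m by simp
  next
    fix f assume f: "f \<in> E_of M B \<and> causal_le M f e \<and> (\<forall>g\<in>E_of M B. causal_le M g e \<longrightarrow> loc_le M g f)"
    have "loc_le M m f" using f m(1) by simp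
    moreover have "loc_le M f m" using m(2) f by simp
    ultimately show "f = m" using loc_antisym[OF wf] by blast
  qed
  have ex: "\<exists>f\<in>E_of M B. causal_le M f e" using m(1) by blast
  have "last_on M B e = Some m" unfolding last_on_def if_P[OF ex] the_eq by (rule refl)
  moreover have "?S = {g\<in>E_of M B. loc_le M g m}"
  proof
    show "?S \<subseteq> {g\<in>E_of M B. loc_le M g m}"
    proof
      fix g assume "g \<in> ?S" then show "g \<in> {g\<in>E_of M B. loc_le M g m}" using m(2) by simp
    qed
    show "{g\<in>E_of M B. loc_le M g m} \<subseteq> ?S"
    proof
      fix g assume g: "g \<in> {g\<in>E_of M B. loc_le M g m}"
      then have "loc_le M g m" by simp
      moreover have "causal_le M m e" using m(1) by simp
      ultimately have "causal_le M g e" by (rule causal_trans[OF loc_causal])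
      then show "g \<in> ?S" using g by simp
    qed
  qed
  moreover have "m \<in> E_of M B" "causal_le M m e" using m(1) by simp_all
  ultimately show ?thesis by (intro exI[where x=m] conjI) assumption+
qed

lemma nth_event_char:
  assumes wf: "wf_msc M" and m: "m \<in> E_of M B"
  shows "nth_event M B (card {g\<in>E_of M B. loc_le M g m}) = m"
proof -
  have fin: "finite (E_of M B)" using wf_fin[OF wf] unfolding E_of_def by simp
  have lt: "card {g\<in>E_of M B. loc_le M g f} < card {g\<in>E_of M B. loc_le M g f'}"
    if f: "f \<in> E_of M B" "f' \<in> E_of M B" "loc_le M f f'" "f \<noteq> f'" for f f'
  proof (rule psubset_card_mono)
    show "finite {g\<in>E_of M B. loc_le M g f'}" using fin by simp
    have "{g\<in>E_of M B. loc_le M g f} \<subseteq> {g\<in>E_of M B. loc_le M g f'}"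
      using loc_trans[OF _ f(3)] by blast
    moreover have "f' \<in> {g\<in>E_of M B. loc_le M g f'}" using f(2) loc_refl[of f' M] unfolding E_of_def by simp
    moreover have "f' \<notin> {g\<in>E_of M B. loc_le M g f}" using loc_antisym[OF wf f(3)] f(4) by blast
    ultimately show "{g\<in>E_of M B. loc_le M g f} \<subset> {g\<in>E_of M B. loc_le M g f'}" by blast
  qed
  show ?thesis
    unfolding nth_event_def
  proof (rule the_equality)
    show "m \<in> E_of M B \<and> card {g\<in>E_of M B. loc_le M g m} = card {g\<in>E_of M B. loc_le M g m}"
      using m by simp
  next
    fix f assume f: "f \<in> E_of M B \<and> card {g\<in>E_of M B. loc_le M g f} = card {g\<in>E_of M B. loc_le M g m}"
    show "f = m"
    proof (rule ccontr)
      assume ne: "f \<noteq> m"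
      have "loc_le M f m \<or> loc_le M m f" using loc_total[OF wf] f m by blast
      then show False
      proof
        assume "loc_le M f m" then show False using lt[of f m] f m ne by simp
      next
        assume "loc_le M m f" then show False using lt[of m f] f m ne by simp
      qed
    qed
  qed
qed

lemma sub_refl: "\<psi> \<in> sub \<psi>"
  by (cases \<psi>) auto

lemma sub_trans: "\<theta> \<in> sub \<psi> \<Longrightarrow> sub \<theta> \<subseteq> sub \<psi>"
  by (induction \<psi>) auto

lemma subs_closed: "\<psi> \<in> subs \<Phi> \<Longrightarrow> \<theta> \<in> sub \<psi> \<Longrightarrow> \<theta> \<in> subs \<Phi>"
  unfolding subs_def using sub_trans by blast


theorem lemma1:
  fixes M :: "('e, 'l::finite, 'x, 'v) msc"
    and I :: "'p \<Rightarrow> 'v list \<Rightarrow> bool"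
    and \<Phi> :: "('l, 'x, 'p) cpl set"
    and A :: 'l and e :: 'e
    and st :: "('l, 'x, 'v, 'p) mstate"
  assumes "wf_msc M"
    and "finite \<Phi>"
    and "e \<in> E_of M A"
    and "coherent M I \<Phi> A st e"
  shows "\<forall>\<psi>\<in>subs \<Phi>. Eval A I st (old st) \<psi> \<longleftrightarrow> sat M I \<psi> e"
proof -
  note wf = assms(1)
  have eev: "e \<in> events M" and epid: "pid M e = A" using assms(3) unfolding E_of_def by auto
  have C1: "\<And>B. vc st B = card {f \<in> E_of M B. causal_le M f e}"
    and C2: "\<And>B. B \<noteq> A \<Longrightarrow> vc st B > 0 \<Longrightarrow>
           (\<forall>\<psi>\<in>subs \<Phi>. view st B \<psi> = Some (sat M I \<psi> (nth_event M B (vc st B)))) \<and>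
           (\<forall>x\<in>QVars \<Phi>. vars st B x = Some (val M (nth_event M B (vc st B)) x))"
    and C2': "\<And>B. B \<noteq> A \<Longrightarrow> vc st B = 0 \<Longrightarrow> (\<forall>x\<in>QVars \<Phi>. vars st B x = None)"
    and C3: "\<forall>x\<in>LVars \<Phi>. store st x = val M e x"
    and C4: "\<forall>x\<in>QVars \<Phi>. vars st A x = Some (val M e x)"
    and C5: "\<forall>\<psi>\<in>subs \<Phi>. old st \<psi> = (case last_loc M e of Some f \<Rightarrow> sat M I \<psi> f | None \<Rightarrow> False)"
  proof -
    note coh = assms(4)[unfolded coherent_def]
    note K1 = coh[THEN conjunct1] and K2 = coh[THEN conjunct2, THEN conjunct1]
      and K3 = coh[THEN conjunct2, THEN conjunct2, THEN conjunct1]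
      and K4 = coh[THEN conjunct2, THEN conjunct2, THEN conjunct2, THEN conjunct1]
      and K5 = coh[THEN conjunct2, THEN conjunct2, THEN conjunct2, THEN conjunct2]
    show "\<And>B. vc st B = card {f \<in> E_of M B. causal_le M f e}" using K1 by simp
    show "\<And>B. B \<noteq> A \<Longrightarrow> vc st B > 0 \<Longrightarrow>
           (\<forall>\<psi>\<in>subs \<Phi>. view st B \<psi> = Some (sat M I \<psi> (nth_event M B (vc st B)))) \<and>
           (\<forall>x\<in>QVars \<Phi>. vars st B x = Some (val M (nth_event M B (vc st B)) x))"
      using K2 by simp
    show "\<And>B. B \<noteq> A \<Longrightarrow> vc st B = 0 \<Longrightarrow> (\<forall>x\<in>QVars \<Phi>. vars st B x = None)"
      using K2 by simp
    show "\<forall>x\<in>LVars \<Phi>. store st x = val M e x" using K3 .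
    show "\<forall>x\<in>QVars \<Phi>. vars st A x = Some (val M e x)" using K4 .
    show "\<forall>\<psi>\<in>subs \<Phi>. old st \<psi> = (case last_loc M e of Some f \<Rightarrow> sat M I \<psi> f | None \<Rightarrow> False)" using K5 .
  qed
  have ceq: "causal_le M e e" using eev unfolding causal_le_def by simp
  have lastA: "last_on M A e = Some e"
  proof -
    have "{f\<in>E_of M A. causal_le M f e} \<noteq> {}" using assms(3) ceq by blast
    then obtain m where m: "last_on M A e = Some m" "m \<in> E_of M A" "causal_le M m e"
      "{f\<in>E_of M A. causal_le M f e} = {g\<in>E_of M A. loc_le M g m}"
      using last_on_char[OF wf] by blast
    have "e \<in> {f\<in>E_of M A. causal_le M f e}" using assms(3) ceq by simp
    then have "loc_le M e m" using m(4) by simp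
    then have "m = e" using causal_antisym[OF wf m(3) loc_causal] by simp
    then show ?thesis using m by simp
  qed
  have last0: "last_on M B e = None" if "vc st B = 0" for B
  proof -
    have "finite {f\<in>E_of M B. causal_le M f e}" using wf_fin[OF wf] unfolding E_of_def by simp
    then have "{f\<in>E_of M B. causal_le M f e} = {}" using that C1 by simp
    then show ?thesis unfolding last_on_def by auto
  qed
  have lastB: "last_on M B e = Some (nth_event M B (vc st B))" if "vc st B > 0" for B
  proof -
    have "{f\<in>E_of M B. causal_le M f e} \<noteq> {}" using that C1 by (metis card.empty less_irrefl)
    then obtain m where m: "last_on M B e = Some m" "m \<in> E_of M B"
      "{f\<in>E_of M B. causal_le M f e} = {g\<in>E_of M B. loc_le M g m}"
      using last_on_char[OF wf] by blast
    have "nth_event M B (vc st B) = m" using C1 m(3) nth_event_char[OF wf m(2)] by simp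
    then show ?thesis using m by simp
  qed
  have vcA: "vc st A > 1" if exf: "\<exists>f. loc_lt M f e"
  proof -
    obtain f where f: "loc_lt M f e" using exf by blast
    have fin: "finite {f \<in> E_of M A. causal_le M f e}" using wf_fin[OF wf] unfolding E_of_def by simp
    have fl: "loc_le M f e" using f unfolding loc_lt_def by simp
    have "f \<in> E_of M A" using loc_E[OF fl] epid by simp
    then have "{f, e} \<subseteq> {f \<in> E_of M A. causal_le M f e}"
      using assms(3) ceq loc_causal[OF fl] by simp
    then have "card {f, e} \<le> vc st A" using C1 card_mono[OF fin] by simp
    moreover have "card {f, e} = 2" using f unfolding loc_lt_def by simp
    ultimately show ?thesis by simp
  qed
  have termeq: "mterm_val st t = term_val M e t" if "Atom p ts \<in> subs \<Phi>" "t \<in> set ts" for p ts t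
  proof (cases t)
    case (Loc x)
    then have "x \<in> LVars \<Phi>" using that unfolding LVars_def by blast
    then show ?thesis using Loc C3 by simp
  next
    case (Qual B x)
    then have x: "x \<in> QVars \<Phi>" using that unfolding QVars_def by blast
    show ?thesis
    proof (cases "B = A")
      case True
      then show ?thesis using Qual x C4 lastA by simp
    next
      case False
      show ?thesis
      proof (cases "vc st B = 0")
        case True
        then show ?thesis using Qual x C2'[OF False] last0 by simp
      next
        case False2: False
        then show ?thesis using Qual x C2[OF False] lastB by simp
      qed
    qed
  qed
  have "Eval A I st (old st) \<psi> = sat M I \<psi> e" if "\<psi> \<in> subs \<Phi>" for \<psi>
    using that
  proof (induction \<psi>)
    case (Atom p ts)
    have meq: "map (\<lambda>t. the (mterm_val st t)) ts = map (\<lambda>t. the (term_val M e t)) ts"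
      using termeq[OF Atom] by (intro map_cong) auto
    have aeq: "(\<forall>t\<in>set ts. mterm_val st t \<noteq> None) = (\<forall>t\<in>set ts. term_val M e t \<noteq> None)"
      using termeq[OF Atom] by auto
    show ?case unfolding Eval.simps sat.simps meq aeq by (rule refl)
  next
    case (At B \<theta>)
    have th: "\<theta> \<in> subs \<Phi>" by (rule subs_closed[OF At.prems]) (simp add: sub_refl)
    show ?case
    proof (cases "B = A")
      case True
      then show ?thesis using At.IH[OF th] lastA by simp
    next
      case False
      show ?thesis
      proof (cases "vc st B = 0")
        case True
        then show ?thesis using False last0 by simp
      next
        case False2: False
        then show ?thesis using False C2[OF False] lastB th by simp
      qed
    qed
  next
    case (Yest \<theta>)
    have th: "\<theta> \<in> subs \<Phi>" by (rule subs_closed[OF Yest.prems]) (simp add: sub_refl)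
    show ?case
    proof (cases "\<exists>f. loc_lt M f e")
      case True
      then show ?thesis using vcA C5 th by (auto split: option.split)
    next
      case False
      then have "last_loc M e = None" unfolding last_loc_def by simp
      then show ?thesis using C5 th by simp
    qed
  next
    case (Since \<theta>1 \<theta>2)
    have th1: "\<theta>1 \<in> subs \<Phi>" by (rule subs_closed[OF Since.prems]) (simp add: sub_refl)
    have th2: "\<theta>2 \<in> subs \<Phi>" by (rule subs_closed[OF Since.prems]) (simp add: sub_refl)
    note IH1 = Since.IH(1)[OF th1] and IH2 = Since.IH(2)[OF th2]
    have le_ee: "loc_le M e e" using loc_refl[OF eev] .
    have noafter: "\<not> (loc_lt M e g \<and> loc_le M g e)" for g
    proof
      assume g: "loc_lt M e g \<and> loc_le M g e"
      then have "e = g" using loc_antisym[OF wf, of e g] unfolding loc_lt_def by blast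
      then show False using g unfolding loc_lt_def by simp
    qed
    have witn: "sat M I (Since \<theta>1 \<theta>2) e" if s2: "sat M I \<theta>2 e"
    proof -
      have "\<forall>g. loc_lt M e g \<and> loc_le M g e \<longrightarrow> sat M I \<theta>1 g" using noafter by blast
      then show ?thesis using s2 le_ee by (simp only: sat.simps) blast
    qed
    show ?case
    proof (cases "\<exists>f. loc_lt M f e")
      case True
      obtain p where p: "last_loc M e = Some p" "loc_lt M p e" "\<forall>g. loc_lt M g e \<longrightarrow> loc_le M g p"
        using last_loc_char[OF wf True] by blast
      have old: "old st (Since \<theta>1 \<theta>2) = sat M I (Since \<theta>1 \<theta>2) p"
        using C5 Since.prems p(1) by simp
      have v: "vc st A > 1" using vcA True by blast
      have pe: "loc_le M p e" "p \<noteq> e" using p(2) unfolding loc_lt_def by auto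
      have "sat M I (Since \<theta>1 \<theta>2) e \<longleftrightarrow>
            sat M I \<theta>2 e \<or> (sat M I \<theta>1 e \<and> sat M I (Since \<theta>1 \<theta>2) p)"
      proof
        assume "sat M I (Since \<theta>1 \<theta>2) e"
        then obtain f where f: "loc_le M f e" "sat M I \<theta>2 f"
          "\<forall>g. loc_lt M f g \<and> loc_le M g e \<longrightarrow> sat M I \<theta>1 g" by auto
        show "sat M I \<theta>2 e \<or> (sat M I \<theta>1 e \<and> sat M I (Since \<theta>1 \<theta>2) p)"
        proof (cases "f = e")
          case True then show ?thesis using f by simp
        next
          case False
          then have fp: "loc_le M f p" using f(1) p(3) unfolding loc_lt_def by blast
          have "loc_lt M f e" using False f(1) unfolding loc_lt_def by simp
          then have "sat M I \<theta>1 e" using f(3) le_ee by simp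
          moreover have "\<forall>g. loc_lt M f g \<and> loc_le M g p \<longrightarrow> sat M I \<theta>1 g"
            using f(3) loc_trans[OF _ pe(1)] by blast
          then have "sat M I (Since \<theta>1 \<theta>2) p"
            using fp f(2) by auto
          ultimately show ?thesis by simp
        qed
      next
        assume A: "sat M I \<theta>2 e \<or> (sat M I \<theta>1 e \<and> sat M I (Since \<theta>1 \<theta>2) p)"
        show "sat M I (Since \<theta>1 \<theta>2) e"
        proof (cases "sat M I \<theta>2 e")
          case True
          then show ?thesis by (rule witn)
        next
          case False
          then have s1: "sat M I \<theta>1 e" and sp: "sat M I (Since \<theta>1 \<theta>2) p" using A by auto
          then obtain f where f: "loc_le M f p" "sat M I \<theta>2 f"
            "\<forall>g. loc_lt M f g \<and> loc_le M g p \<longrightarrow> sat M I \<theta>1 g" by auto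
          have "\<forall>g. loc_lt M f g \<and> loc_le M g e \<longrightarrow> sat M I \<theta>1 g"
          proof (intro allI impI)
            fix g assume g: "loc_lt M f g \<and> loc_le M g e"
            show "sat M I \<theta>1 g"
            proof (cases "g = e")
              case True then show ?thesis using s1 by simp
            next
              case False
              then have "loc_le M g p" using g p(3) unfolding loc_lt_def by blast
              then show ?thesis using f(3) g by blast
            qed
          qed
          moreover have "loc_le M f e" using loc_trans[OF f(1) pe(1)] .
          ultimately show ?thesis using f(2) by auto
        qed
      qed
      then show ?thesis using IH1 IH2 old v by simp
    next
      case False
      then have ll: "last_loc M e = None" unfolding last_loc_def by simp
      have old: "\<not> old st (Since \<theta>1 \<theta>2)" using C5 Since.prems ll by simp
      have "sat M I (Since \<theta>1 \<theta>2) e \<longleftrightarrow> sat M I \<theta>2 e"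
      proof
        assume "sat M I (Since \<theta>1 \<theta>2) e"
        then obtain f where f: "loc_le M f e" "sat M I \<theta>2 f" by auto
        then have "f = e" using False unfolding loc_lt_def by blast
        then show "sat M I \<theta>2 e" using f by simp
      next
        assume "sat M I \<theta>2 e"
        then show "sat M I (Since \<theta>1 \<theta>2) e"
          by (rule witn)
      qed
      then show ?thesis using IH2 old by simp
    qed
  next
    case (Conj \<theta>1 \<theta>2)
    have "\<theta>1 \<in> subs \<Phi>" by (rule subs_closed[OF Conj.prems]) (simp add: sub_refl)
    moreover have "\<theta>2 \<in> subs \<Phi>" by (rule subs_closed[OF Conj.prems]) (simp add: sub_refl)
    ultimately show ?case using Conj.IH by simp
  next
    case (Disj \<theta>1 \<theta>2)
    have "\<theta>1 \<in> subs \<Phi>" by (rule subs_closed[OF Disj.prems]) (simp add: sub_refl)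
    moreover have "\<theta>2 \<in> subs \<Phi>" by (rule subs_closed[OF Disj.prems]) (simp add: sub_refl)
    ultimately show ?case using Disj.IH by simp
  next
    case (Neg \<theta>)
    have "\<theta> \<in> subs \<Phi>" by (rule subs_closed[OF Neg.prems]) (simp add: sub_refl)
    then show ?case using Neg.IH by simp
  qed
  then show ?thesis by blast
qed

end
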